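(* Let $r \geq 3$ and let $G$ be a graph on vertex set $[n]$ that percolates in the $K_r$-bootstrap percolation process, i.e. $\langle G \rangle_{K_r} = E(K_n)$. Then $G$ is $(r-2)$-connected.
   Context: $K_r$-bootstrap percolation: for a graph $G$ on vertex set $[n]$ (identified with its edge set $\subseteq E(K_n)$), set $G_0 := G$ and $G_{t+1} := G_t \cup \{e \in E(K_n) : \exists$ a copy $H$ of $K_r$ with $e \in H \subseteq G_t \cup \{e\}\}$; the closure is $\langle G \rangle_{K_r} := \bigcup_t G_t$, and $G$ percolates if its closure is all of $E(K_n)$. *)

theory Defs
  imports Main
begin

(* Vertex set [n] is rendered as {0..<n}; edges are 2-element sets {u,v}. *)

definition Kn_edges :: "nat \<Rightarrow> nat set set" where
  "Kn_edges n = {{u, v} | u v. u < n \<and> v < n \<and> u \<noteq> v}"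

definition clique_edges :: "nat set \<Rightarrow> nat set set" where
  "clique_edges S = {{u, v} | u v. u \<in> S \<and> v \<in> S \<and> u \<noteq> v}"

definition bp_step :: "nat \<Rightarrow> nat \<Rightarrow> nat set set \<Rightarrow> nat set set" where
  "bp_step n r G = G \<union> {e \<in> Kn_edges n. \<exists>S. S \<subseteq> {0..<n} \<and> card S = r \<and>
        e \<in> clique_edges S \<and> clique_edges S \<subseteq> G \<union> {e}}"

definition bp_closure :: "nat \<Rightarrow> nat \<Rightarrow> nat set set \<Rightarrow> nat set set" where
  "bp_closure n r G = (\<Union>t. (bp_step n r ^^ t) G)"

definition percolates :: "nat \<Rightarrow> nat \<Rightarrow> nat set set \<Rightarrow> bool" where
  "percolates n r G \<longleftrightarrow> bp_closure n r G = Kn_edges n"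

definition connected_on :: "nat set \<Rightarrow> nat set set \<Rightarrow> bool" where
  "connected_on V E \<longleftrightarrow> (\<forall>u\<in>V. \<forall>v\<in>V.
      (u, v) \<in> {(x, y). x \<in> V \<and> y \<in> V \<and> {x, y} \<in> E}\<^sup>*)"

definition k_connected :: "nat \<Rightarrow> nat \<Rightarrow> nat set set \<Rightarrow> bool" where
  "k_connected n k G \<longleftrightarrow> n > k \<and>
     (\<forall>X. X \<subseteq> {0..<n} \<and> card X < k \<longrightarrow> connected_on ({0..<n} - X) G)"

end

theory Submission
  imports Defs
begin

lemma step_inv:
  assumes XS: "X \<subseteq> {0..<n}" and cX: "card X < r - 2"
    and AV: "A \<subseteq> {0..<n} - X"
    and P: "\<forall>x\<in>A. \<forall>y\<in>({0..<n} - X) - A. {x,y} \<notin> H"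
  shows "\<forall>x\<in>A. \<forall>y\<in>({0..<n} - X) - A. {x,y} \<notin> bp_step n r H"
proof (intro ballI notI)
  fix x y assume xA: "x \<in> A" and yB: "y \<in> ({0..<n} - X) - A" and e: "{x,y} \<in> bp_step n r H"
  have "{x,y} \<notin> H" using P xA yB by blast
  then obtain S where S: "S \<subseteq> {0..<n}" "card S = r" "{x,y} \<in> clique_edges S"
      "clique_edges S \<subseteq> H \<union> {{x,y}}"
    using e unfolding bp_step_def by blast
  have xy: "x \<noteq> y" using xA yB by blast
  from S(3) obtain p q where pq: "{x,y} = {p,q}" "p \<in> S" "q \<in> S"
    unfolding clique_edges_def by blast
  have xS: "x \<in> S" and yS: "y \<in> S" using pq by (auto simp: doubleton_eq_iff)
  have fS: "finite S" using S(1) finite_subset by blast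
  have fX: "finite X" using XS finite_subset by blast
  have "card S \<le> card (S - X) + card X"
  proof -
    have "card S \<le> card ((S - X) \<union> X)" using fS fX by (intro card_mono) auto
    also have "\<dots> \<le> card (S - X) + card X" by (rule card_Un_le)
    finally show ?thesis .
  qed
  hence c1: "card (S - X) > 2" using S(2) cX by linarith
  have "card (S - X) \<le> card (S - X - {x,y}) + card {x,y}"
  proof -
    have "card (S - X) \<le> card ((S - X - {x,y}) \<union> {x,y})" using fS by (intro card_mono) auto
    also have "\<dots> \<le> card (S - X - {x,y}) + card {x,y}" by (rule card_Un_le)
    finally show ?thesis .
  qed
  hence "card (S - X - {x,y}) > 0" using c1 xy by simp
  hence "S - X - {x,y} \<noteq> {}" by (simp add: card_gt_0_iff)
  then obtain c where "c \<in> S - X - {x,y}" by blast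
  hence c: "c \<in> S" "c \<notin> X" "c \<noteq> x" "c \<noteq> y" by auto
  have cV: "c \<in> {0..<n} - X" using c S(1) by blast
  show False
  proof (cases "c \<in> A")
    case True
    have "{c,y} \<in> clique_edges S" using c yS unfolding clique_edges_def by blast
    hence "{c,y} \<in> H \<union> {{x,y}}" using S(4) by blast
    moreover have "{c,y} \<noteq> {x,y}" using c by (auto simp: doubleton_eq_iff)
    ultimately show False using P True yB by blast
  next
    case False
    have "{x,c} \<in> clique_edges S" using c xS unfolding clique_edges_def by blast
    hence "{x,c} \<in> H \<union> {{x,y}}" using S(4) by blast
    moreover have "{x,c} \<noteq> {x,y}" using c by (auto simp: doubleton_eq_iff)
    ultimately show False using P False xA cV by blast
  qed
qed

theorem mainTheorem5:
  fixes n r :: nat and G :: "nat set set"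
  assumes "r \<ge> 3"
    and "n \<ge> r - 1"
    and "G \<subseteq> Kn_edges n"
    and "percolates n r G"
  shows "k_connected n (r - 2) G"
  unfolding k_connected_def
proof (intro conjI allI impI)
  show "r - 2 < n" using assms by linarith
  fix X assume X: "X \<subseteq> {0..<n} \<and> card X < r - 2"
  define V where "V = {0..<n} - X"
  define R where "R = {(x, y). x \<in> V \<and> y \<in> V \<and> {x, y} \<in> G}"
  show "connected_on ({0..<n} - X) G"
    unfolding connected_on_def
  proof (intro ballI)
    fix u v assume u: "u \<in> {0..<n} - X" and v: "v \<in> {0..<n} - X"
    show "(u, v) \<in> {(x, y). x \<in> {0..<n} - X \<and> y \<in> {0..<n} - X \<and> {x, y} \<in> G}\<^sup>*"
    proof (rule ccontr)
      assume nc: "(u, v) \<notin> {(x, y). x \<in> {0..<n} - X \<and> y \<in> {0..<n} - X \<and> {x, y} \<in> G}\<^sup>*"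
      define A where "A = {w \<in> V. (u, w) \<in> R\<^sup>*}"
      have AV: "A \<subseteq> {0..<n} - X" unfolding A_def V_def by blast
      have P0: "\<forall>x\<in>A. \<forall>y\<in>({0..<n} - X) - A. {x,y} \<notin> G"
      proof (intro ballI notI)
        fix x y assume "x \<in> A" "y \<in> ({0..<n} - X) - A" "{x,y} \<in> G"
        hence "(x,y) \<in> R" "(u,x) \<in> R\<^sup>*" unfolding R_def A_def V_def by auto
        hence "(u,y) \<in> R\<^sup>*" by (meson rtrancl_into_rtrancl)
        thus False using \<open>y \<in> ({0..<n} - X) - A\<close> unfolding A_def V_def by blast
      qed
      have Pt: "\<forall>x\<in>A. \<forall>y\<in>({0..<n} - X) - A. {x,y} \<notin> (bp_step n r ^^ t) G" for t
      proof (induction t)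
        case 0 then show ?case using P0 by simp
      next
        case (Suc t) then show ?case
          using step_inv[OF _ _ AV, of r "(bp_step n r ^^ t) G"] X by simp
      qed
      have uA: "u \<in> A" unfolding A_def V_def using u by simp
      have "R = {(x, y). x \<in> {0..<n} - X \<and> y \<in> {0..<n} - X \<and> {x, y} \<in> G}"
        unfolding R_def V_def by simp
      hence "(u,v) \<notin> R\<^sup>*" using nc by simp
      hence vB: "v \<in> ({0..<n} - X) - A" using v unfolding A_def V_def by simp
      have "u \<noteq> v" using uA vB by blast
      hence "{u,v} \<in> Kn_edges n" using u v unfolding Kn_edges_def by auto
      hence "{u,v} \<in> bp_closure n r G" using assms(4) unfolding percolates_def by simp
      then obtain t where "{u,v} \<in> (bp_step n r ^^ t) G" unfolding bp_closure_def by blast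
      thus False using Pt[of t] uA vB by blast
    qed
  qed
qed

end
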